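(* Let $k\ge2$ be an integer, $0\le\alpha\le1$, $N\ge2$, $X\ge1$, and let $a_1,\dots,a_N$ be complex numbers. Writing $e(x)=e^{2\pi ix}$, \[ \int_X^{2X}x^\alpha\Big|\sum_{1\le n\le N}a_n\,e(k\sqrt[k]{nx})\Big|^2dx=\sum_{1\le n\le N}|a_n|^2\cdot\Big(\frac{2^{1+\alpha}-1}{1+\alpha}X^{1+\alpha}+O\big(X^{1+\alpha-\frac1k}N^{1-\frac1k}\log N\big)\Big). \]
   Context: The implied constant may depend on $k$ and $\alpha$ but not on $X$, $N$ or the $a_n$. *)

theory Defs
  imports "HOL-Analysis.Analysis"
begin

definition e :: "real \<Rightarrow> complex" where
  "e x = exp (2 * pi * \<i> * complex_of_real x)"

end

theory Submission
  imports Defs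
begin


lemma e_deriv:
  assumes "(g has_real_derivative g') (at x)"
  shows "((\<lambda>x. e (g x)) has_vector_derivative (e (g x) * (2 * pi * \<i> * of_real g'))) (at x)"
proof -
  have 1: "((\<lambda>x. 2 * pi * \<i> * complex_of_real (g x)) has_vector_derivative (2 * pi * \<i> * of_real g')) (at x)"
    by (intro derivative_eq_intros) (use assms in auto)
  have "((exp \<circ> (\<lambda>x. 2 * pi * \<i> * complex_of_real (g x))) has_vector_derivative
          ((2 * pi * \<i> * of_real g') * exp (2 * pi * \<i> * complex_of_real (g x)))) (at x)"
    by (rule field_vector_diff_chain_at[OF 1]) (rule DERIV_exp)
  then show ?thesis by (simp add: e_def o_def mult.commute)
qed

lemma norm_e: "norm (e a) = 1" unfolding e_def by (simp add: norm_exp_eq_Re)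

lemma cont_e: "continuous_on S g \<Longrightarrow> continuous_on S (\<lambda>x. e (g x))"
  unfolding e_def by (intro continuous_intros)

lemma osc:
  fixes k :: nat and \<alpha> d X :: real
  assumes k: "k \<ge> 1" and a0: "0 \<le> \<alpha>" and a1: "\<alpha> \<le> 1" and d: "d \<noteq> 0" and X: "X \<ge> 1"
  shows "norm (integral {X..2*X} (\<lambda>x. of_real (x powr \<alpha>) * e (real k * d * root k x)))
           \<le> 3 * X powr (1+\<alpha>-1/real k) / \<bar>d\<bar>"
proof -
  define \<beta> where "\<beta> = 1+\<alpha>-1/real k"
  have kpos: "real k > 0" using k by simp
  have "1/real k \<le> 1" using k by simp
  then have b0: "\<beta> \<ge> 0" using a0 by (simp add: \<beta>_def)
  have "0 \<le> 1/real k" by simp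
  then have b2: "\<beta> \<le> 2" using a1 unfolding \<beta>_def by linarith
  define c0 where "c0 = inverse (2*pi*\<i> * complex_of_real d)"
  define E where "E x = e (real k * d * x powr (1/real k))" for x
  define F where "F x = of_real (x powr \<beta>) * E x * c0" for x
  define g where "g x = of_real (\<beta> * x powr (\<beta> - 1)) * E x * c0" for x
  define f where "f x = of_real (x powr \<alpha>) * E x" for x
  have Ed: "(E has_vector_derivative E x * (2*pi*\<i> * of_real (d * x powr (1/real k - 1)))) (at x)"
    if x: "x > 0" for x
  proof -
    have "((\<lambda>x. real k * d * x powr (1/real k)) has_real_derivative
            real k * d * (1/real k * x powr (1/real k - 1))) (at x)"
      using x by (intro derivative_eq_intros) auto
    from e_deriv[OF this] show ?thesis using kpos unfolding E_def by simp
  qed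
  have Fd: "(F has_vector_derivative (f x + g x)) (at x)" if x: "x > 0" for x
  proof -
    have p: "((\<lambda>x. complex_of_real (x powr \<beta>)) has_vector_derivative of_real (\<beta> * x powr (\<beta> - 1))) (at x)"
      using x by (intro derivative_eq_intros) auto
    have "(F has_vector_derivative ((of_real (x powr \<beta>) * (E x * (2*pi*\<i> * of_real (d * x powr (1/real k - 1))))
           + of_real (\<beta> * x powr (\<beta> - 1)) * E x) * c0)) (at x)"
      unfolding F_def by (intro has_vector_derivative_mult_left has_vector_derivative_mult p Ed x)
    moreover have "(of_real (x powr \<beta>) * (E x * (2*pi*\<i> * of_real (d * x powr (1/real k - 1))))
           + of_real (\<beta> * x powr (\<beta> - 1)) * E x) * c0 = f x + g x"
    proof -
      have pw: "x powr \<beta> * x powr (1/real k - 1) = x powr \<alpha>"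
        by (simp add: powr_add[symmetric] \<beta>_def)
      have "(of_real (x powr \<beta>) * (E x * (2*pi*\<i> * of_real (d * x powr (1/real k - 1))))) * c0
            = of_real (x powr \<beta> * x powr (1/real k - 1)) * E x"
        using d by (simp add: c0_def field_simps)
      then show ?thesis unfolding f_def g_def pw by (simp add: algebra_simps)
    qed
    ultimately show ?thesis by simp
  qed
  have Xpos: "X > 0" using X by simp
  have ftc: "((\<lambda>x. f x + g x) has_integral (F (2*X) - F X)) {X..2*X}"
    by (rule fundamental_theorem_of_calculus) (use Xpos Fd in \<open>auto intro: has_vector_derivative_at_within\<close>)
  have gc: "continuous_on {X..2*X} g"
    unfolding g_def E_def using Xpos by (auto intro!: continuous_intros cont_e)
  have gi: "(g has_integral integral {X..2*X} g) {X..2*X}"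
    using integrable_continuous_real[OF gc] by (simp add: has_integral_integral)
  have "((\<lambda>x. (f x + g x) - g x) has_integral (F (2*X) - F X - integral {X..2*X} g)) {X..2*X}"
    by (rule has_integral_diff[OF ftc gi])
  then have fi: "integral {X..2*X} f = F (2*X) - F X - integral {X..2*X} g"
    by (simp add: integral_unique)
  have cabs: "norm c0 = 1 / (2*pi*\<bar>d\<bar>)"
  proof -
    have n: "norm (2*pi*\<i> * complex_of_real d) = 2*pi*\<bar>d\<bar>" by (simp add: norm_mult)
    show ?thesis unfolding c0_def norm_inverse n by (simp only: inverse_eq_divide)
  qed
  have nF: "norm (F y) = y powr \<beta> / (2*pi*\<bar>d\<bar>)" if "y > 0" for y
    using that by (simp add: F_def E_def norm_mult norm_e cabs)
  have "(2*X) powr \<beta> = 2 powr \<beta> * X powr \<beta>" using Xpos by (simp add: powr_mult)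
  also have "\<dots> \<le> 4 * X powr \<beta>"
  proof -
    have "2 powr \<beta> \<le> 2 powr 2" using b2 by (intro powr_mono) auto
    then show ?thesis by (intro mult_right_mono) auto
  qed
  finally have p2: "(2*X) powr \<beta> \<le> 4 * X powr \<beta>" .
  have "norm (F (2*X)) = (2*X) powr \<beta> / (2*pi*\<bar>d\<bar>)" using Xpos nF by simp
  also have "\<dots> \<le> 4 * X powr \<beta> / (2*pi*\<bar>d\<bar>)" by (rule divide_right_mono[OF p2]) simp
  finally have F2: "norm (F (2*X)) \<le> 4 * X powr \<beta> / (2*pi*\<bar>d\<bar>)" .
  have F1: "norm (F X) = X powr \<beta> / (2*pi*\<bar>d\<bar>)" using Xpos by (simp add: nF)
  have gb: "norm (g x) \<le> 8 * X powr \<beta> / X / (2*pi*\<bar>d\<bar>)" if x: "x \<in> cbox X (2*X)" for x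
  proof -
    have xp: "x > 0" "X \<le> x" "x \<le> 2*X" using x Xpos by auto
    have "x powr (\<beta> - 1) = x powr \<beta> / x" using xp by (simp add: powr_diff)
    also have "\<dots> \<le> (2*X) powr \<beta> / X"
      using xp b0 by (intro frac_le powr_mono2) auto
    also have "\<dots> \<le> 4 * X powr \<beta> / X" using p2 Xpos
      by (simp add: divide_right_mono)
    finally have "\<beta> * x powr (\<beta> - 1) \<le> 2 * (4 * X powr \<beta> / X)"
      using b0 b2 by (intro mult_mono) auto
    then have q: "\<beta> * x powr (\<beta> - 1) \<le> 8 * X powr \<beta> / X" by simp
    have "norm (g x) = \<beta> * x powr (\<beta> - 1) / (2*pi*\<bar>d\<bar>)"
      using xp b0 by (simp add: g_def E_def norm_mult norm_e cabs)
    also have "\<dots> \<le> 8 * X powr \<beta> / X / (2*pi*\<bar>d\<bar>)" by (rule divide_right_mono[OF q]) simp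
    finally show ?thesis .
  qed
  have gI: "norm (integral {X..2*X} g) \<le> 8 * X powr \<beta> / X / (2*pi*\<bar>d\<bar>) * Henstock_Kurzweil_Integration.content (cbox X (2*X))"
    by (rule has_integral_bound[of _ g]) (use gi gb Xpos in \<open>auto intro!: divide_nonneg_nonneg mult_nonneg_nonneg\<close>)
  then have gI': "norm (integral {X..2*X} g) \<le> 8 * X powr \<beta> / (2*pi*\<bar>d\<bar>)"
    using Xpos by simp
  have "norm (integral {X..2*X} f) \<le> norm (F (2*X)) + norm (F X) + norm (integral {X..2*X} g)"
    unfolding fi by (metis norm_triangle_ineq4 norm_triangle_le_diff add_mono order_refl)
  also have "\<dots> \<le> 13 * X powr \<beta> / (2*pi*\<bar>d\<bar>)"
    using F2 F1 gI' by (simp add: field_simps)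
  also have "\<dots> \<le> 3 * X powr \<beta> / \<bar>d\<bar>"
  proof -
    have "13 / (2*pi) \<le> 3" using pi_gt3 by (simp add: field_simps)
    then have "13 / (2*pi) * (X powr \<beta> / \<bar>d\<bar>) \<le> 3 * (X powr \<beta> / \<bar>d\<bar>)"
      by (intro mult_right_mono) auto
    then show ?thesis by simp
  qed
  finally have main: "norm (integral {X..2*X} f) \<le> 3 * X powr \<beta> / \<bar>d\<bar>" .
  have "integral {X..2*X} (\<lambda>x. of_real (x powr \<alpha>) * e (real k * d * root k x)) = integral {X..2*X} f"
    by (rule integral_cong) (use Xpos kpos in \<open>simp add: f_def E_def root_powr_inverse\<close>)
  then show ?thesis using main by (simp add: \<beta>_def)
qed



lemma harm_ln:
  assumes "(n::nat) \<ge> 1"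
  shows "(\<Sum>j=1..n. 1 / real j) \<le> 1 + ln (real n)"
  using assms
proof (induction n rule: nat_induct_at_least)
  case base then show ?case by simp
next
  case (Suc n)
  have np: "real n > 0" using Suc by simp
  have "ln (real n / real (Suc n)) \<le> real n / real (Suc n) - 1"
    using np by (intro ln_le_minus_one) simp
  moreover have "real n / real (Suc n) - 1 = - (1 / real (Suc n))"
    by (simp add: field_simps)
  moreover have "ln (real n / real (Suc n)) = ln (real n) - ln (real (Suc n))"
    using np by (simp add: ln_div)
  ultimately have "1 / real (Suc n) \<le> ln (real (Suc n)) - ln (real n)" by linarith
  then show ?case using Suc by simp
qed

lemma sum_inv_dist:
  assumes "1 \<le> m" "m \<le> N"
  shows "(\<Sum>n=1..N. if n = m then 0 else 1 / \<bar>real m - real n\<bar>) \<le> 2 * (1 + ln (real N))"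
proof -
  let ?H = "\<Sum>j=1..N. 1 / real j"
  have split: "(\<Sum>n=1..N. if n = m then 0 else 1 / \<bar>real m - real n\<bar>) =
      (\<Sum>n=1..N. if n < m then 1 / real (m - n) else 0) + (\<Sum>n=1..N. if m < n then 1 / real (n - m) else 0)"
    by (subst sum.distrib[symmetric], rule sum.cong) (auto simp: of_nat_diff)
  have A: "(\<Sum>n=1..N. if n < m then 1 / real (m - n) else 0) \<le> ?H"
  proof -
    have "(\<Sum>n=1..N. if n < m then 1 / real (m - n) else 0) = (\<Sum>n\<in>{n\<in>{1..N}. n < m}. 1 / real (m - n))"
      by (rule sum.inter_filter[symmetric]) simp
    also have "\<dots> = (\<Sum>j\<in>(\<lambda>n. m - n) ` {n\<in>{1..N}. n < m}. 1 / real j)"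
      by (subst sum.reindex) (auto simp: inj_on_def)
    also have "\<dots> \<le> ?H"
      by (rule sum_mono2) (use assms in auto)
    finally show ?thesis .
  qed
  have B: "(\<Sum>n=1..N. if m < n then 1 / real (n - m) else 0) \<le> ?H"
  proof -
    have "(\<Sum>n=1..N. if m < n then 1 / real (n - m) else 0) = (\<Sum>n\<in>{n\<in>{1..N}. m < n}. 1 / real (n - m))"
      by (rule sum.inter_filter[symmetric]) simp
    also have "\<dots> = (\<Sum>j\<in>(\<lambda>n. n - m) ` {n\<in>{1..N}. m < n}. 1 / real j)"
      by (subst sum.reindex) (auto simp: inj_on_def)
    also have "\<dots> \<le> ?H"
      by (rule sum_mono2) (use assms in auto)
    finally show ?thesis .
  qed
  have h: "?H \<le> 1 + ln (real N)" using assms by (intro harm_ln) simp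
  note split
  also have "(\<Sum>n=1..N. if n < m then 1 / real (m - n) else 0) + (\<Sum>n=1..N. if m < n then 1 / real (n - m) else 0) \<le> ?H + ?H"
    by (rule add_mono[OF A B])
  also have "\<dots> \<le> 2 * (1 + ln (real N))" using h by simp
  finally show ?thesis .
qed

lemma root_diff_lower:
  fixes k m n N :: nat
  assumes k: "k \<ge> 1" and "m \<le> N" "n \<le> N" and N1: "N \<ge> 1"
  shows "\<bar>real m - real n\<bar> \<le> real k * real N powr (1 - 1/real k) * \<bar>root k (real m) - root k (real n)\<bar>"
proof -
  define x where "x = root k (real m)"
  define y where "y = root k (real n)"
  define R where "R = root k (real N)"
  have kp: "0 < k" using k by simp
  have xk: "x ^ k = real m" unfolding x_def using kp by (simp add: real_root_pow_pos2)
  have yk: "y ^ k = real n" unfolding y_def using kp by (simp add: real_root_pow_pos2)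
  have x0: "0 \<le> x" "x \<le> R" unfolding x_def R_def using kp assms by auto
  have y0: "0 \<le> y" "y \<le> R" unfolding y_def R_def using kp assms by auto
  have "real m - real n = (x - y) * (\<Sum>i<k. y^(k - Suc i) * x^i)"
    unfolding xk[symmetric] yk[symmetric] by (rule power_diff_sumr2)
  then have "\<bar>real m - real n\<bar> = \<bar>x - y\<bar> * (\<Sum>i<k. y^(k - Suc i) * x^i)"
    using x0 y0 by (simp add: abs_mult sum_nonneg)
  also have "\<dots> \<le> \<bar>x - y\<bar> * (\<Sum>i<k. R^(k - 1))"
  proof (intro mult_left_mono sum_mono)
    fix i assume i: "i \<in> {..<k}"
    have "y^(k - Suc i) * x^i \<le> R^(k - Suc i) * R^i"
      using x0 y0 by (intro mult_mono power_mono) auto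
    also have "\<dots> = R^(k - 1)" using i by (simp add: power_add[symmetric])
    finally show "y^(k - Suc i) * x^i \<le> R^(k - 1)" .
  qed simp
  also have "R^(k - 1) = real N powr (1 - 1/real k)"
  proof -
    have "R = real N powr (1/real k)" unfolding R_def using kp N1 by (simp add: root_powr_inverse)
    then have "R^(k - 1) = real N powr (1/real k * real (k - 1))"
      using N1 by (simp add: powr_realpow[symmetric] powr_powr)
    also have "1/real k * real (k - 1) = 1 - 1/real k" using k by (simp add: of_nat_diff field_simps)
    finally show ?thesis .
  qed
  finally show ?thesis by (simp add: x_def y_def algebra_simps)
qed

lemma G_bound:
  fixes k m N :: nat
  assumes k: "k \<ge> 1" and m: "1 \<le> m" "m \<le> N" and N2: "N \<ge> 2"
  shows "(\<Sum>n=1..N. if n = m then 0 else 1 / \<bar>root k (real m) - root k (real n)\<bar>)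
          \<le> 6 * real k * real N powr (1 - 1/real k) * ln (real N)"
proof -
  define K where "K = real k * real N powr (1 - 1/real k)"
  have K0: "K \<ge> 0" unfolding K_def by simp
  have "(\<Sum>n=1..N. if n = m then 0 else 1 / \<bar>root k (real m) - root k (real n)\<bar>)
        \<le> (\<Sum>n=1..N. K * (if n = m then 0 else 1 / \<bar>real m - real n\<bar>))"
  proof (rule sum_mono)
    fix n assume n: "n \<in> {1..N}"
    show "(if n = m then 0 else 1 / \<bar>root k (real m) - root k (real n)\<bar>)
          \<le> K * (if n = m then 0 else 1 / \<bar>real m - real n\<bar>)"
    proof (cases "n = m")
      case False
      have low: "\<bar>real m - real n\<bar> \<le> K * \<bar>root k (real m) - root k (real n)\<bar>"
        unfolding K_def using root_diff_lower[of k m N n] k m n N2 by simp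
      have p: "\<bar>real m - real n\<bar> > 0" using False by simp
      then have p2: "\<bar>root k (real m) - root k (real n)\<bar> > 0" using low K0
        by (metis abs_ge_zero less_le_not_le mult_zero_right order_antisym_conv)
      have "1 / \<bar>root k (real m) - root k (real n)\<bar> \<le> K / \<bar>real m - real n\<bar>"
        using low p p2 by (simp add: field_simps)
      then show ?thesis using False by simp
    qed simp
  qed
  also have "\<dots> = K * (\<Sum>n=1..N. if n = m then 0 else 1 / \<bar>real m - real n\<bar>)"
    by (simp add: sum_distrib_left)
  also have "\<dots> \<le> K * (2 * (1 + ln (real N)))"
    by (intro mult_left_mono sum_inv_dist K0) (use m in auto)
  also have "\<dots> \<le> K * (6 * ln (real N))"
  proof -
    have "ln (1/2::real) \<le> 1/2 - 1" by (intro ln_le_minus_one) simp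
    then have l2: "ln (2::real) \<ge> 1/2" by (simp add: ln_div)
    have "ln (2::real) \<le> ln (real N)" using N2 by simp
    then have l3: "1/2 \<le> ln (real N)" using l2 by (rule order_trans[rotated])
    have "2 * (1 + ln (real N)) \<le> 6 * ln (real N)" using l3 by (simp add: algebra_simps)
    then show ?thesis using K0 by (intro mult_left_mono) auto
  qed
  finally show ?thesis by (simp add: K_def algebra_simps)
qed

lemma sym_bound:
  fixes b :: "nat \<Rightarrow> real" and G :: "nat \<Rightarrow> nat \<Rightarrow> real"
  assumes fin: "finite S" and sym: "\<And>m n. G m n = G n m" and G0: "\<And>m n. G m n \<ge> 0"
  shows "(\<Sum>m\<in>S. \<Sum>n\<in>S. b m * b n * G m n) \<le> (\<Sum>m\<in>S. (b m)^2 * (\<Sum>n\<in>S. G m n))"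
proof -
  have "(\<Sum>m\<in>S. \<Sum>n\<in>S. b m * b n * G m n) \<le> (\<Sum>m\<in>S. \<Sum>n\<in>S. ((b m)^2 / 2 * G m n + (b n)^2 / 2 * G m n))"
  proof (intro sum_mono)
    fix m n
    have "b m * b n \<le> (b m)^2 / 2 + (b n)^2 / 2"
      using sum_squares_ge_zero[of "b m - b n" 0] by (simp add: power2_eq_square algebra_simps)
    then have "b m * b n * G m n \<le> ((b m)^2 / 2 + (b n)^2 / 2) * G m n"
      using G0 by (intro mult_right_mono) auto
    then show "b m * b n * G m n \<le> (b m)^2 / 2 * G m n + (b n)^2 / 2 * G m n"
      by (simp add: algebra_simps)
  qed
  also have "\<dots> = (\<Sum>m\<in>S. \<Sum>n\<in>S. (b m)^2 / 2 * G m n) + (\<Sum>m\<in>S. \<Sum>n\<in>S. (b n)^2 / 2 * G m n)"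
    by (simp add: sum.distrib)
  also have "(\<Sum>m\<in>S. \<Sum>n\<in>S. (b n)^2 / 2 * G m n) = (\<Sum>m\<in>S. \<Sum>n\<in>S. (b m)^2 / 2 * G m n)"
    by (subst sum.swap) (simp add: sym)
  also have "(\<Sum>m\<in>S. \<Sum>n\<in>S. (b m)^2 / 2 * G m n) + (\<Sum>m\<in>S. \<Sum>n\<in>S. (b m)^2 / 2 * G m n)
      = (\<Sum>m\<in>S. (b m)^2 * (\<Sum>n\<in>S. G m n))"
  proof -
    have e: "\<And>m. (\<Sum>n\<in>S. (b m)^2 / 2 * G m n) = (b m)^2 / 2 * (\<Sum>n\<in>S. G m n)"
      by (simp add: sum_distrib_left)
    show ?thesis unfolding e sum.distrib[symmetric]
      by (rule sum.cong[OF refl]) (simp add: field_simps)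
  qed
  finally show ?thesis .
qed



lemma e_mult_cnj: "e a * cnj (e b) = e (a - b)"
  unfolding e_def by (simp add: exp_cnj exp_add[symmetric] algebra_simps)

lemma e_0: "e 0 = 1" by (simp add: e_def)

theorem lemma3p1:
  fixes k :: nat and \<alpha> :: real
  assumes "k \<ge> 2" and "0 \<le> \<alpha>" and "\<alpha> \<le> 1"
  shows "\<exists>C>0. \<forall>(N::nat) (X::real) (a::nat \<Rightarrow> complex).
           N \<ge> 2 \<longrightarrow> X \<ge> 1 \<longrightarrow>
           \<bar>integral {X..2*X}
               (\<lambda>x. x powr \<alpha> * (cmod (\<Sum>n=1..N. a n * e (real k * root k (real n * x))))\<^sup>2)
             - (\<Sum>n=1..N. (cmod (a n))\<^sup>2) * ((2 powr (1+\<alpha>) - 1) / (1+\<alpha>) * X powr (1+\<alpha>))\<bar>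
           \<le> C * (\<Sum>n=1..N. (cmod (a n))\<^sup>2) *
               (X powr (1 + \<alpha> - 1 / real k) * real N powr (1 - 1 / real k) * ln (real N))"
proof -
  have k1: "k \<ge> 1" using assms by simp
  have kp: "k > 0" using assms by simp
  define C where "C = 18 * real k"
  show ?thesis
  proof (intro exI[of _ C] conjI allI impI)
    show "C > 0" using kp by (simp add: C_def)
    fix N :: nat and X :: real and a :: "nat \<Rightarrow> complex"
    assume N2: "N \<ge> 2" and X1: "X \<ge> 1"
    have Xpos: "X > 0" using X1 by simp
    define r where "r n = root k (real n)" for n
    define P where "P = X powr (1 + \<alpha> - 1 / real k)"
    define I where "I m n = integral {X..2*X} (\<lambda>x. of_real (x powr \<alpha>) * e (real k * (r m - r n) * root k x))" for m n
    define M where "M = (2 powr (1+\<alpha>) - 1) / (1+\<alpha>) * X powr (1+\<alpha>)"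
    define f where "f x = x powr \<alpha> * (cmod (\<Sum>n=1..N. a n * e (real k * root k (real n * x))))\<^sup>2" for x
    define h where "h m n x = (a m * cnj (a n)) * (of_real (x powr \<alpha>) * e (real k * (r m - r n) * root k x))" for m n x
    have pt: "complex_of_real (f x) = (\<Sum>m=1..N. \<Sum>n=1..N. h m n x)" if x: "x \<in> {X..2*X}" for x
    proof -
      have xp: "x > 0" using x Xpos by simp
      have E: "e (real k * root k (real n * x)) = e (real k * r n * root k x)" for n
        by (simp add: r_def real_root_mult mult.assoc)
      have "complex_of_real (f x) = of_real (x powr \<alpha>) *
          ((\<Sum>m=1..N. a m * e (real k * r m * root k x)) * cnj (\<Sum>n=1..N. a n * e (real k * r n * root k x)))"
        unfolding f_def E of_real_mult complex_norm_square by (rule refl)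
      also have "\<dots> = (\<Sum>m=1..N. \<Sum>n=1..N. of_real (x powr \<alpha>) *
            ((a m * e (real k * r m * root k x)) * cnj (a n * e (real k * r n * root k x))))"
        unfolding cnj_sum sum_product by (simp only: sum_distrib_left)
      also have "\<dots> = (\<Sum>m=1..N. \<Sum>n=1..N. h m n x)"
      proof (intro sum.cong refl)
        fix m n
        have "e (real k * r m * root k x) * cnj (e (real k * r n * root k x)) = e (real k * (r m - r n) * root k x)"
          by (simp add: e_mult_cnj algebra_simps)
        then show "of_real (x powr \<alpha>) * ((a m * e (real k * r m * root k x)) * cnj (a n * e (real k * r n * root k x)))
             = h m n x"
          unfolding h_def by (simp add: algebra_simps)
      qed
      finally show ?thesis .
    qed
    have hc: "continuous_on {X..2*X} (\<lambda>x. of_real (x powr \<alpha>) * e (c * root k x))" for c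
      using Xpos by (auto intro!: continuous_intros cont_e)
    have hi: "(\<lambda>x. of_real (x powr \<alpha>) * e (c * root k x)) integrable_on {X..2*X}" for c
      by (rule integrable_continuous_real[OF hc])
    have fc: "continuous_on {X..2*X} f"
      unfolding f_def using Xpos by (auto intro!: continuous_intros cont_e)
    have fi: "((\<lambda>x. complex_of_real (f x)) has_integral of_real (integral {X..2*X} f)) {X..2*X}"
      by (rule has_integral_of_real) (rule integrable_integral[OF integrable_continuous_real[OF fc]])
    have intf: "complex_of_real (integral {X..2*X} f) = (\<Sum>m=1..N. \<Sum>n=1..N. a m * cnj (a n) * I m n)"
    proof -
      have "complex_of_real (integral {X..2*X} f) = integral {X..2*X} (\<lambda>x. complex_of_real (f x))"
        using fi by (simp add: integral_unique)
      also have "\<dots> = integral {X..2*X} (\<lambda>x. \<Sum>m=1..N. \<Sum>n=1..N. h m n x)"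
        by (rule integral_cong) (simp add: pt)
      also have "\<dots> = (\<Sum>m=1..N. integral {X..2*X} (\<lambda>x. \<Sum>n=1..N. h m n x))"
        by (rule integral_sum) (auto simp: h_def intro!: integrable_sum integrable_on_mult_right hi)
      also have "\<dots> = (\<Sum>m=1..N. \<Sum>n=1..N. integral {X..2*X} (h m n))"
        by (intro sum.cong refl integral_sum) (auto simp: h_def intro!: integrable_on_mult_right hi)
      also have "\<dots> = (\<Sum>m=1..N. \<Sum>n=1..N. a m * cnj (a n) * I m n)"
        by (intro sum.cong refl) (simp add: h_def[abs_def] I_def)
      finally show ?thesis .
    qed
    have diag: "I m m = of_real M" for m
    proof -
      have "((\<lambda>x. x powr \<alpha>) has_integral ((2*X) powr (1+\<alpha>) / (1+\<alpha>) - X powr (1+\<alpha>) / (1+\<alpha>))) {X..2*X}"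
      proof (rule fundamental_theorem_of_calculus)
        show "X \<le> 2*X" using Xpos by simp
        fix x assume x: "x \<in> {X..2*X}"
        then have xp: "x > 0" using Xpos by simp
        have d1: "((\<lambda>x. x powr (1+\<alpha>)) has_real_derivative (1+\<alpha>) * x powr \<alpha>) (at x)"
          using xp by (intro derivative_eq_intros) auto
        have "((\<lambda>x. x powr (1+\<alpha>) / (1+\<alpha>)) has_real_derivative (1+\<alpha>) * x powr \<alpha> / (1+\<alpha>)) (at x)"
          by (rule DERIV_cdivide[OF d1])
        then have "((\<lambda>x. x powr (1+\<alpha>) / (1+\<alpha>)) has_real_derivative x powr \<alpha>) (at x)"
          using assms by simp
        then show "((\<lambda>x. x powr (1+\<alpha>) / (1+\<alpha>)) has_vector_derivative x powr \<alpha>) (at x within {X..2*X})"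
          by (simp add: has_real_derivative_iff_has_vector_derivative has_vector_derivative_at_within)
      qed
      moreover have "(2*X) powr (1+\<alpha>) / (1+\<alpha>) - X powr (1+\<alpha>) / (1+\<alpha>) = M"
      proof -
        have "(2*X) powr (1+\<alpha>) = 2 powr (1+\<alpha>) * X powr (1+\<alpha>)" using Xpos by (simp add: powr_mult)
        then show ?thesis unfolding M_def by (simp add: diff_divide_distrib[symmetric] left_diff_distrib)
      qed
      ultimately have "((\<lambda>x. x powr \<alpha>) has_integral M) {X..2*X}" by simp
      from has_integral_of_real[OF this]
      have "((\<lambda>x. complex_of_real (x powr \<alpha>)) has_integral of_real M) {X..2*X}" .
      then show ?thesis unfolding I_def by (simp add: e_0 integral_unique)
    qed
    define D where "D = (\<Sum>m=1..N. \<Sum>n=1..N. if m = n then 0 else a m * cnj (a n) * I m n)"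
    have decomp: "complex_of_real (integral {X..2*X} f) - of_real ((\<Sum>n=1..N. (cmod (a n))\<^sup>2) * M) = D"
    proof -
      have "(\<Sum>m=1..N. \<Sum>n=1..N. a m * cnj (a n) * I m n) =
            (\<Sum>m=1..N. (\<Sum>n=1..N. if m = n then a m * cnj (a n) * I m n else 0) +
                       (\<Sum>n=1..N. if m = n then 0 else a m * cnj (a n) * I m n))"
        by (rule sum.cong[OF refl]) (subst sum.distrib[symmetric], rule sum.cong[OF refl], simp)
      also have "\<dots> = (\<Sum>m=1..N. a m * cnj (a m) * of_real M) + D"
      proof -
        have "(\<Sum>m=1..N. \<Sum>n=1..N. if m = n then a m * cnj (a n) * I m n else 0) = (\<Sum>m=1..N. a m * cnj (a m) * of_real M)"
          by (rule sum.cong[OF refl]) (simp add: diag)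
        then show ?thesis by (simp add: sum.distrib D_def)
      qed
      also have "(\<Sum>m=1..N. a m * cnj (a m) * of_real M) = of_real ((\<Sum>n=1..N. (cmod (a n))\<^sup>2) * M)"
        unfolding of_real_mult of_real_sum sum_distrib_right complex_norm_square by (rule refl)
      finally show ?thesis using intf by simp
    qed
    define G where "G m n = (if m = n then 0 else 1 / \<bar>r m - r n\<bar>)" for m n
    have nI: "norm (I m n) \<le> 3 * P * G m n" if "m \<noteq> n" for m n
    proof -
      have "r m \<noteq> r n" using that kp by (simp add: r_def)
      then have "norm (I m n) \<le> 3 * X powr (1+\<alpha>-1/real k) / \<bar>r m - r n\<bar>"
        unfolding I_def using osc[of k \<alpha> "r m - r n" X] k1 assms X1 by (simp add: mult.assoc)
      then show ?thesis using that by (simp add: G_def P_def)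
    qed
    have "norm D \<le> (\<Sum>m=1..N. \<Sum>n=1..N. norm (if m = n then 0 else a m * cnj (a n) * I m n))"
      unfolding D_def by (rule order_trans[OF norm_sum sum_mono]) (rule norm_sum)
    also have "\<dots> \<le> (\<Sum>m=1..N. \<Sum>n=1..N. 3 * P * (cmod (a m) * cmod (a n) * G m n))"
    proof (intro sum_mono)
      fix m n
      show "norm (if m = n then 0 else a m * cnj (a n) * I m n) \<le> 3 * P * (cmod (a m) * cmod (a n) * G m n)"
      proof (cases "m = n")
        case False
        have "norm (a m * cnj (a n) * I m n) = cmod (a m) * cmod (a n) * norm (I m n)"
          by (simp add: norm_mult)
        also have "\<dots> \<le> cmod (a m) * cmod (a n) * (3 * P * G m n)"
          by (intro mult_left_mono nI False) auto
        finally show ?thesis using False by (simp add: algebra_simps)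
      qed (simp add: G_def)
    qed
    also have "\<dots> = 3 * P * (\<Sum>m=1..N. \<Sum>n=1..N. cmod (a m) * cmod (a n) * G m n)"
      by (simp add: sum_distrib_left)
    also have "\<dots> \<le> 3 * P * (\<Sum>m=1..N. (cmod (a m))^2 * (\<Sum>n=1..N. G m n))"
      by (intro mult_left_mono sym_bound) (auto simp: G_def P_def)
    also have "\<dots> \<le> 3 * P * (\<Sum>m=1..N. (cmod (a m))^2 * (6 * real k * real N powr (1 - 1/real k) * ln (real N)))"
    proof (rule mult_left_mono[OF sum_mono])
      fix m assume m: "m \<in> {1..N}"
      have "(\<Sum>n=1..N. G m n) \<le> 6 * real k * real N powr (1 - 1/real k) * ln (real N)"
      proof -
        have "(\<Sum>n=1..N. G m n) = (\<Sum>n=1..N. if n = m then 0 else 1 / \<bar>root k (real m) - root k (real n)\<bar>)"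
          by (rule sum.cong[OF refl]) (auto simp: G_def r_def)
        then show ?thesis using G_bound[of k m N] k1 m N2 by simp
      qed
      then show "(cmod (a m))^2 * (\<Sum>n=1..N. G m n) \<le> (cmod (a m))^2 * (6 * real k * real N powr (1 - 1/real k) * ln (real N))"
        by (intro mult_left_mono) auto
    qed (simp add: P_def)
    also have "\<dots> = C * (\<Sum>n=1..N. (cmod (a n))\<^sup>2) *
               (X powr (1 + \<alpha> - 1 / real k) * real N powr (1 - 1 / real k) * ln (real N))"
      by (simp add: C_def P_def sum_distrib_right sum_distrib_left algebra_simps)
    finally have Dle: "norm D \<le> C * (\<Sum>n=1..N. (cmod (a n))\<^sup>2) *
               (X powr (1 + \<alpha> - 1 / real k) * real N powr (1 - 1 / real k) * ln (real N))" .
    have "\<bar>integral {X..2*X} f - (\<Sum>n=1..N. (cmod (a n))\<^sup>2) * M\<bar> = norm D"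
    proof -
      have "D = complex_of_real (integral {X..2*X} f - (\<Sum>n=1..N. (cmod (a n))\<^sup>2) * M)"
        unfolding of_real_diff by (rule sym[OF decomp])
      then show ?thesis by (simp only: norm_of_real)
    qed
    then show "\<bar>integral {X..2*X}
               (\<lambda>x. x powr \<alpha> * (cmod (\<Sum>n=1..N. a n * e (real k * root k (real n * x))))\<^sup>2)
             - (\<Sum>n=1..N. (cmod (a n))\<^sup>2) * ((2 powr (1+\<alpha>) - 1) / (1+\<alpha>) * X powr (1+\<alpha>))\<bar>
           \<le> C * (\<Sum>n=1..N. (cmod (a n))\<^sup>2) *
               (X powr (1 + \<alpha> - 1 / real k) * real N powr (1 - 1 / real k) * ln (real N))"
      using Dle unfolding f_def M_def by simp
  qed
qed

end
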